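(* Let $m\ge2$ and let $k\ge2$ divide $m$. Consider $n=m$ voters and alternatives $a_1,\dots,a_m$, where voter $i$ ranks $a_i$ first. For every partition of the voters into $k$ districts of $m/k$ voters each, there exist a unit-sum valuation profile consistent with these first choices and a resolution of ties such that, in the resulting district-based election with Plurality Voting in each district and unit weights, the election winner $x$ satisfies $\max_j\mathrm{SW}(j\mid\mathbf v)/\mathrm{SW}(x\mid\mathbf v)\ge1+\frac{m^2}{2}$. In particular, there are instances in which every symmetric $k$-districting yields distributed distortion $\Omega(m^2)$ for Plurality Voting.
   Context: Valuations satisfy $v_{ij}\ge0$, $\sum_j v_{ij}=1$; a voter's ranking is induced by her valuations with ties among equal values broken arbitrarily, and "consistent with first choices" means voter $i$'s induced ranking (under some tie-breaking) has $a_i$ first. $\mathrm{SW}(j\mid\mathbf v)=\sum_i v_{ij}$. Plurality Voting in a district elects an alternative ranked first by the most voters of the district (ties arbitrary); the election winner is an alternative that is the local winner in the maximum number of districts (ties arbitrary). *)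

theory Defs
  imports Complex_Main
begin

text \<open>Voters and alternatives are both indexed by 0..m-1 (so n = m voters);
  v i j is the valuation of voter i for alternative j.\<close>

definition unit_sum_profile :: "nat \<Rightarrow> (nat \<Rightarrow> nat \<Rightarrow> real) \<Rightarrow> bool" where
  "unit_sum_profile m v \<longleftrightarrow>
     (\<forall>i<m. (\<forall>j<m. v i j \<ge> 0) \<and> (\<Sum>j<m. v i j) = 1)"

text \<open>Voter i's induced ranking (under some tie-breaking) has top a i
  iff a i is an alternative of maximal value for i.\<close>
definition consistent_first :: "nat \<Rightarrow> (nat \<Rightarrow> nat \<Rightarrow> real) \<Rightarrow> (nat \<Rightarrow> nat) \<Rightarrow> bool" where
  "consistent_first m v a \<longleftrightarrow> (\<forall>i<m. a i < m \<and> (\<forall>j<m. v i j \<le> v i (a i)))"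

definition SW :: "nat \<Rightarrow> (nat \<Rightarrow> nat \<Rightarrow> real) \<Rightarrow> nat \<Rightarrow> real" where
  "SW n v j = (\<Sum>i<n. v i j)"

definition symmetric_districting :: "nat \<Rightarrow> nat \<Rightarrow> (nat \<Rightarrow> nat) \<Rightarrow> bool" where
  "symmetric_districting n k d \<longleftrightarrow>
     (\<forall>i<n. d i < k) \<and> (\<forall>t<k. card {i. i < n \<and> d i = t} = n div k)"

definition plurality_score :: "nat \<Rightarrow> (nat \<Rightarrow> nat) \<Rightarrow> (nat \<Rightarrow> nat) \<Rightarrow> nat \<Rightarrow> nat \<Rightarrow> nat" where
  "plurality_score n d a t j = card {i. i < n \<and> d i = t \<and> a i = j}"

definition plurality_winner :: "nat \<Rightarrow> nat \<Rightarrow> (nat \<Rightarrow> nat) \<Rightarrow> (nat \<Rightarrow> nat) \<Rightarrow> nat \<Rightarrow> nat \<Rightarrow> bool" where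
  "plurality_winner n m d a t w \<longleftrightarrow>
     w < m \<and> (\<forall>j<m. plurality_score n d a t j \<le> plurality_score n d a t w)"

definition election_winner :: "nat \<Rightarrow> nat \<Rightarrow> (nat \<Rightarrow> nat) \<Rightarrow> nat \<Rightarrow> bool" where
  "election_winner m k w x \<longleftrightarrow>
     x < m \<and> (\<forall>j<m. card {t. t < k \<and> w t = j} \<le> card {t. t < k \<and> w t = x})"

end

theory Submission
  imports Defs
begin

theorem theorem9:
  fixes m k :: nat and d :: "nat \<Rightarrow> nat"
  assumes "m \<ge> 2" and "k \<ge> 2" and "k dvd m"
    and "symmetric_districting m k d"
  shows "\<exists>v w x. unit_sum_profile m v \<and> consistent_first m v (\<lambda>i. i)
           \<and> (\<forall>t<k. plurality_winner m m d (\<lambda>i. i) t (w t))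
           \<and> election_winner m k w x
           \<and> Max (SW m v ` {..<m}) / SW m v x \<ge> 1 + real m ^ 2 / 2"
proof -
  have dl: "\<forall>i<m. d i < k" and dc: "\<forall>t<k. card {i. i < m \<and> d i = t} = m div k"
    using assms(4) unfolding symmetric_districting_def by auto
  have mk: "m div k \<ge> 1" using assms(1-3)
  proof -
    have "k \<le> m" using assms(1,3) by (intro dvd_imp_le) auto
    then show ?thesis using assms(2) by (simp add: div_greater_zero_iff Suc_le_eq)
  qed
  define w where "w t = (SOME i. i < m \<and> d i = t)" for t
  have wt: "w t < m \<and> d (w t) = t" if "t < k" for t
  proof -
    have "card {i. i < m \<and> d i = t} \<noteq> 0" using dc that mk by auto
    then have "{i. i < m \<and> d i = t} \<noteq> {}" by (metis card.empty)
    then have "\<exists>i. i < m \<and> d i = t" by auto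
    then show ?thesis unfolding w_def by (rule someI_ex)
  qed
  define x where "x = w 0"
  have xm: "x < m" using wt[of 0] assms(2) x_def by auto
  define y :: nat where "y = (if x = 0 then 1 else 0)"
  have ym: "y < m" and yx: "y \<noteq> x" using assms(1) y_def by auto
  define v :: "nat \<Rightarrow> nat \<Rightarrow> real" where
    "v i j = (if i = x then 1 / real m else (if j = i then 1/2 else 0) + (if j = y then 1/2 else 0))" for i j
  have mpos: "real m > 0" using assms(1) by auto
  have us: "unit_sum_profile m v"
    unfolding unit_sum_profile_def
  proof (intro allI impI conjI)
    fix i j assume "i < m" "j < m" then show "v i j \<ge> 0" unfolding v_def by auto
  next
    fix i assume im: "i < m"
    show "(\<Sum>j<m. v i j) = 1"
    proof (cases "i = x")
      case True then show ?thesis using mpos by (simp add: v_def)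
    next
      case False
      then have "(\<Sum>j<m. v i j) = (\<Sum>j<m. (if j = i then 1/2 else 0) + (if j = y then 1/2 else 0))"
        by (simp add: v_def)
      also have "\<dots> = 1" using im ym by (simp add: sum.distrib sum.delta')
      finally show ?thesis .
    qed
  qed
  have cf: "consistent_first m v (\<lambda>i. i)"
    unfolding consistent_first_def v_def by auto
  have pw: "\<forall>t<k. plurality_winner m m d (\<lambda>i. i) t (w t)"
  proof (intro allI impI)
    fix t assume t: "t < k"
    have "plurality_score m d (\<lambda>i. i) t j \<le> 1" for j
    proof -
      have h: "{i. i < m \<and> d i = t \<and> i = j} \<subseteq> {j}" by auto
      show ?thesis unfolding plurality_score_def using card_mono[OF _ h] by simp
    qed
    moreover have "plurality_score m d (\<lambda>i. i) t (w t) = 1"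
    proof -
      have "{i. i < m \<and> d i = t \<and> i = w t} = {w t}" using wt[OF t] by auto
      then show ?thesis by (simp add: plurality_score_def)
    qed
    ultimately show "plurality_winner m m d (\<lambda>i. i) t (w t)"
      unfolding plurality_winner_def using wt[OF t] by auto
  qed
  have ew: "election_winner m k w x"
    unfolding election_winner_def
  proof (intro conjI allI impI)
    show "x < m" by (rule xm)
    fix j assume "j < m"
    have h: "{t. t < k \<and> w t = j} \<subseteq> {d j}" using wt by auto
    have "card {t. t < k \<and> w t = j} \<le> 1"
      using card_mono[OF _ h] by simp
    moreover have "{t. t < k \<and> w t = x} = {0}"
    proof (rule set_eqI, rule iffI)
      fix t assume "t \<in> {t. t < k \<and> w t = x}"
      then have "t < k" "w t = w 0" using x_def by auto
      then have "t = d (w 0)" using wt by metis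
      also have "\<dots> = 0" using wt[of 0] assms(2) by auto
      finally show "t \<in> {0}" by simp
    next
      fix t assume "t \<in> {0::nat}" then show "t \<in> {t. t < k \<and> w t = x}" using x_def assms(2) by auto
    qed
    ultimately show "card {t. t < k \<and> w t = j} \<le> card {t. t < k \<and> w t = x}" by simp
  qed
  have swx: "SW m v x = 1 / real m"
  proof -
    have "SW m v x = (\<Sum>i<m. if i = x then 1 / real m else 0)"
      unfolding SW_def by (rule sum.cong) (auto simp: v_def yx[symmetric])
    also have "\<dots> = 1 / real m" using xm by (simp add: sum.delta')
    finally show ?thesis .
  qed
  have swy: "SW m v y = real m / 2 + 1 / real m"
  proof -
    have "SW m v y = (\<Sum>i<m. 1/2 + (if i = x then 1 / real m - 1/2 else 0) + (if i = y then 1/2 else 0))"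
      unfolding SW_def by (rule sum.cong) (auto simp: v_def yx)
    also have "\<dots> = real m / 2 + 1 / real m" using xm ym by (simp add: sum.distrib sum.delta')
    finally show ?thesis .
  qed
  have "SW m v y \<le> Max (SW m v ` {..<m})" using ym by (intro Max_ge) auto
  then have "SW m v y / SW m v x \<le> Max (SW m v ` {..<m}) / SW m v x"
    using swx mpos by (intro divide_right_mono) auto
  moreover have "SW m v y / SW m v x = 1 + real m ^ 2 / 2"
    using mpos unfolding swx swy by (simp add: field_simps power2_eq_square)
  ultimately have "Max (SW m v ` {..<m}) / SW m v x \<ge> 1 + real m ^ 2 / 2" by simp
  with us cf pw ew show ?thesis by blast
qed

end
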